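(* Consider the scalar system $x_{t+1}=a x_t+w_t$ with $|a|<1$ and $x_0=0$, where the noise $w_t$ is i.i.d. over time with $|w_t|\le\bar w$, zero mean and variance $\sigma_w^2$, and let $\{x_t\}_{t=1}^T$ be the resulting trajectory. Then $$\mathbb{E}\left[\left(\sum_{t=1}^T\left(x_t^2-\mathbb{E}[x_t^2]\right)\right)^2\right]\le\frac{\bar w^4(1+a^2)}{(1-|a|)^4(1-a^2)}\,T.$$ *)

theory Defs
  imports "HOL-Probability.Probability"
begin

fun traj :: "real \<Rightarrow> (nat \<Rightarrow> 'a \<Rightarrow> real) \<Rightarrow> nat \<Rightarrow> 'a \<Rightarrow> real" where
  "traj a w 0 \<omega> = 0"
| "traj a w (Suc t) \<omega> = a * traj a w t \<omega> + w t \<omega>"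

end

theory Submission
  imports Defs
begin


definition Gf :: "real \<Rightarrow> nat \<Rightarrow> nat \<Rightarrow> (nat \<Rightarrow> real) \<Rightarrow> real" where
  "Gf a T r f = 2 * (\<Sum>k<T-r. a^k * (\<Sum>s<r. a^(k+r-s) * f s))"
definition hf :: "real \<Rightarrow> nat \<Rightarrow> nat \<Rightarrow> real" where
  "hf a T r = (\<Sum>k<T-r. a^(2*k))"

lemma sq_sum: "(\<Sum>r<n. c r)^2 = (\<Sum>r<n. (c r)^2 + 2 * c r * (\<Sum>s<r. c s))" for c :: "nat \<Rightarrow> real"
  by (induction n) (auto simp: power2_eq_square algebra_simps)

lemma Gf_Suc: "r < T \<Longrightarrow> Gf a (Suc T) r f = Gf a T r f + 2 * a^(T-r) * (\<Sum>s<r. a^(T-s) * f s)"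
proof -
  assume r: "r < T"
  have e: "Suc T - r = Suc (T - r)" using r by simp
  have "(\<Sum>s<r. a^(T-r+r-s) * f s) = (\<Sum>s<r. a^(T-s) * f s)"
    by (rule sum.cong) (use r in auto)
  moreover have "Gf a (Suc T) r f = 2 * ((\<Sum>k<T-r. a^k * (\<Sum>s<r. a^(k+r-s) * f s)) + a^(T-r) * (\<Sum>s<r. a^(T-r+r-s) * f s))"
    unfolding Gf_def e by simp
  ultimately show ?thesis by (simp add: Gf_def algebra_simps)
qed

lemma hf_Suc: "r < T \<Longrightarrow> hf a (Suc T) r = hf a T r + a^(2*(T-r))"
  by (simp add: hf_def Suc_diff_le less_imp_le)

lemma alg: "(\<Sum>t<T. (\<Sum>s<Suc t. a^(t-s) * f s)^2) = (\<Sum>r<T. f r * Gf a T r f + (f r)^2 * hf a T r)"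
proof (induction T)
  case 0 then show ?case by simp
next
  case (Suc T)
  have last: "Gf a (Suc T) T f = 2 * (\<Sum>s<T. a^(T-s) * f s)" "hf a (Suc T) T = 1"
    by (simp_all add: Gf_def hf_def)
  have "(\<Sum>r<Suc T. f r * Gf a (Suc T) r f + (f r)^2 * hf a (Suc T) r)
     = (\<Sum>r<T. f r * Gf a T r f + (f r)^2 * hf a T r)
       + (\<Sum>r<Suc T. (a^(T-r) * f r)^2 + 2 * (a^(T-r) * f r) * (\<Sum>s<r. a^(T-s) * f s))"
  proof -
    have "(\<Sum>r<T. f r * Gf a (Suc T) r f + (f r)^2 * hf a (Suc T) r)
        = (\<Sum>r<T. (f r * Gf a T r f + (f r)^2 * hf a T r)
             + ((a^(T-r) * f r)^2 + 2 * (a^(T-r) * f r) * (\<Sum>s<r. a^(T-s) * f s)))"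
    proof (rule sum.cong)
      fix r assume "r \<in> {..<T}"
      then have r: "r < T" by simp
      have p: "a^(2*(T-r)) = a^(T-r) * a^(T-r)" by (simp add: mult_2 power_add)
      show "f r * Gf a (Suc T) r f + (f r)^2 * hf a (Suc T) r
        = (f r * Gf a T r f + (f r)^2 * hf a T r)
             + ((a^(T-r) * f r)^2 + 2 * (a^(T-r) * f r) * (\<Sum>s<r. a^(T-s) * f s))"
        unfolding Gf_Suc[OF r] hf_Suc[OF r] p by (simp add: power2_eq_square algebra_simps)
    qed simp
    then show ?thesis by (simp add: sum.distrib last algebra_simps power2_eq_square)
  qed
  also have "(\<Sum>r<Suc T. (a^(T-r) * f r)^2 + 2 * (a^(T-r) * f r) * (\<Sum>s<r. a^(T-s) * f s))
      = (\<Sum>s<Suc T. a^(T-s) * f s)^2"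
    by (rule sq_sum[symmetric])
  finally show ?case using Suc by simp
qed

lemma geo: "0 \<le> x \<Longrightarrow> x < 1 \<Longrightarrow> (\<Sum>j<n. x^j) \<le> 1/(1-x)" for x :: real
proof -
  assume x: "0 \<le> x" "x < 1"
  have "(\<Sum>j<n. x^j) = (1 - x^n)/(1-x)" using x by (simp add: sum_gp_strict)
  also have "\<dots> \<le> 1/(1-x)" using x by (intro divide_right_mono) auto
  finally show ?thesis .
qed

lemma inner_bound:
  fixes a :: real
  assumes b: "\<bar>a\<bar> < 1" and W: "\<And>i. \<bar>f i\<bar> \<le> W"
  shows "\<bar>\<Sum>s<r. a^(k+r-s) * f s\<bar> \<le> W * \<bar>a\<bar>^(Suc k) / (1 - \<bar>a\<bar>)"
proof -
  have W0: "0 \<le> W" using W[of 0] by linarith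
  have "\<bar>\<Sum>s<r. a^(k+r-s) * f s\<bar> \<le> (\<Sum>s<r. \<bar>a^(k+r-s) * f s\<bar>)" by (rule sum_abs)
  also have "\<dots> \<le> (\<Sum>s<r. W * \<bar>a\<bar>^(Suc k) * \<bar>a\<bar>^(r - Suc s))"
  proof (rule sum_mono)
    fix s assume "s \<in> {..<r}"
    then have e: "k+r-s = Suc k + (r - Suc s)" by auto
    have "\<bar>a^(k+r-s) * f s\<bar> = \<bar>a\<bar>^(k+r-s) * \<bar>f s\<bar>" by (simp add: abs_mult power_abs)
    also have "\<dots> \<le> \<bar>a\<bar>^(k+r-s) * W" by (rule mult_left_mono[OF W]) simp
    finally show "\<bar>a^(k+r-s) * f s\<bar> \<le> W * \<bar>a\<bar>^(Suc k) * \<bar>a\<bar>^(r - Suc s)"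
      unfolding e power_add by (simp add: algebra_simps)
  qed
  also have "\<dots> = W * \<bar>a\<bar>^(Suc k) * (\<Sum>s<r. \<bar>a\<bar>^(r - Suc s))" by (simp add: sum_distrib_left)
  also have "(\<Sum>s<r. \<bar>a\<bar>^(r - Suc s)) = (\<Sum>j<r. \<bar>a\<bar>^j)" by (rule sum.nat_diff_reindex)
  also have "W * \<bar>a\<bar>^(Suc k) * (\<Sum>j<r. \<bar>a\<bar>^j) \<le> W * \<bar>a\<bar>^(Suc k) * (1/(1-\<bar>a\<bar>))"
    by (rule mult_left_mono[OF geo]) (use b W0 in auto)
  finally show ?thesis by simp
qed

lemma Gf_bound:
  fixes a :: real
  assumes b: "\<bar>a\<bar> < 1" and W: "\<And>i. \<bar>f i\<bar> \<le> W"
  shows "\<bar>Gf a T r f\<bar> \<le> 2 * W * \<bar>a\<bar> / ((1 - \<bar>a\<bar>) * (1 - a^2))"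
proof -
  have W0: "0 \<le> W" using W[of 0] by linarith
  have a2: "a^2 = \<bar>a\<bar>^2" by simp
  have a2': "0 \<le> \<bar>a\<bar>^2" "\<bar>a\<bar>^2 < 1" using b by (auto simp: abs_square_less_1)
  have "\<bar>\<Sum>k<T-r. a^k * (\<Sum>s<r. a^(k+r-s) * f s)\<bar> \<le> (\<Sum>k<T-r. \<bar>a^k * (\<Sum>s<r. a^(k+r-s) * f s)\<bar>)"
    by (rule sum_abs)
  also have "\<dots> \<le> (\<Sum>k<T-r. W * \<bar>a\<bar> / (1 - \<bar>a\<bar>) * (\<bar>a\<bar>^2)^k)"
  proof (rule sum_mono)
    fix k
    have "\<bar>a^k * (\<Sum>s<r. a^(k+r-s) * f s)\<bar> = \<bar>a\<bar>^k * \<bar>\<Sum>s<r. a^(k+r-s) * f s\<bar>"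
      by (simp add: abs_mult power_abs)
    also have "\<dots> \<le> \<bar>a\<bar>^k * (W * \<bar>a\<bar>^(Suc k) / (1 - \<bar>a\<bar>))"
      by (rule mult_left_mono[OF inner_bound[OF b W]]) simp
    also have "\<dots> = W * \<bar>a\<bar> / (1 - \<bar>a\<bar>) * (\<bar>a\<bar>^2)^k"
      unfolding power2_eq_square power_mult_distrib by (simp add: algebra_simps)
    finally show "\<bar>a^k * (\<Sum>s<r. a^(k+r-s) * f s)\<bar> \<le> W * \<bar>a\<bar> / (1 - \<bar>a\<bar>) * (\<bar>a\<bar>^2)^k" .
  qed
  also have "\<dots> = W * \<bar>a\<bar> / (1 - \<bar>a\<bar>) * (\<Sum>k<T-r. (\<bar>a\<bar>^2)^k)" by (simp add: sum_distrib_left)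
  also have "\<dots> \<le> W * \<bar>a\<bar> / (1 - \<bar>a\<bar>) * (1 / (1 - \<bar>a\<bar>^2))"
    by (rule mult_left_mono[OF geo[OF a2']]) (use b W0 in auto)
  finally show ?thesis unfolding Gf_def a2 by (simp add: abs_mult)
qed

lemma hf_bound:
  fixes a :: real
  assumes b: "\<bar>a\<bar> < 1"
  shows "0 \<le> hf a T r" "hf a T r \<le> 1 / (1 - a^2)"
proof -
  have a2': "0 \<le> a^2" "a^2 < 1" using b by (auto simp: abs_square_less_1)
  show "0 \<le> hf a T r" unfolding hf_def by (auto intro!: sum_nonneg simp: power_mult)
  show "hf a T r \<le> 1 / (1 - a^2)" unfolding hf_def power_mult by (rule geo[OF a2'])
qed

lemma Yf_bound:
  fixes a :: real
  assumes b: "\<bar>a\<bar> < 1" and W: "\<And>i. \<bar>f i\<bar> \<le> W" and s: "0 \<le> s2" "s2 \<le> W^2"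
  shows "\<bar>f r * Gf a T r f + ((f r)^2 - s2) * hf a T r\<bar> \<le> W^2 / (1 - \<bar>a\<bar>)^2"
proof -
  have W0: "0 \<le> W" using W[of 0] by linarith
  have ab: "0 \<le> \<bar>a\<bar>" "\<bar>a\<bar> < 1" using b by auto
  have a2: "1 - a^2 = (1 - \<bar>a\<bar>) * (1 + \<bar>a\<bar>)" by (simp add: algebra_simps power2_eq_square)
  have a2p: "0 < 1 - a^2" unfolding a2 using ab by auto
  have "\<bar>f r * Gf a T r f\<bar> \<le> W * (2 * W * \<bar>a\<bar> / ((1 - \<bar>a\<bar>) * (1 - a^2)))"
    unfolding abs_mult by (rule mult_mono[OF W Gf_bound[OF b W]]) (use W0 in auto)
  moreover have "\<bar>((f r)^2 - s2) * hf a T r\<bar> \<le> W^2 * (1 / (1 - a^2))"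
  proof -
    have "(f r)^2 \<le> W^2" using W[of r] by (metis power2_abs power_mono abs_ge_zero)
    then have "\<bar>(f r)^2 - s2\<bar> \<le> W^2" unfolding abs_le_iff using s zero_le_power2[of "f r"] by linarith
    then show ?thesis unfolding abs_mult using hf_bound[OF b, of T r]
      by (intro mult_mono) auto
  qed
  ultimately have "\<bar>f r * Gf a T r f + ((f r)^2 - s2) * hf a T r\<bar>
     \<le> W * (2 * W * \<bar>a\<bar> / ((1 - \<bar>a\<bar>) * (1 - a^2))) + W^2 * (1 / (1 - a^2))"
    by (smt (verit))
  also have "\<dots> = W^2 / (1 - \<bar>a\<bar>)^2"
  proof -
    have ga: "\<And>b::real. 0 \<le> b \<Longrightarrow> b < 1 \<Longrightarrow>
       W * (2 * W * b / ((1 - b) * (1 - b^2))) + W^2 * (1 / (1 - b^2)) = W^2 / (1 - b)^2"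
    proof -
      fix b :: real assume b: "0 \<le> b" "b < 1"
      have e: "1 - b^2 = (1 - b) * (1 + b)" by (simp add: algebra_simps power2_eq_square)
      define x where "x = 1 - b"
      define y where "y = 1 + b"
      have n: "x \<noteq> 0" "y \<noteq> 0" using b by (auto simp: x_def y_def)
      have yx: "2 * b + x = y" by (simp add: x_def y_def)
      have "W * (2 * W * b / (x * (x * y))) + W^2 * (1 / (x * y)) = W^2 * (2 * b + x) / (x * (x * y))"
        using n by (simp add: field_simps power2_eq_square)
      also have "\<dots> = W^2 / x^2" unfolding yx using n by (simp add: power2_eq_square)
      finally show "W * (2 * W * b / ((1 - b) * (1 - b^2))) + W^2 * (1 / (1 - b^2)) = W^2 / (1 - b)^2"
        unfolding e x_def y_def by (simp add: mult.assoc)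
    qed
    show ?thesis using ga[OF ab] by simp
  qed
  finally show ?thesis .
qed



lemma Gf_restrict: "q \<le> r \<Longrightarrow> Gf a T q (restrict f {..<r}) = Gf a T q f"
  unfolding Gf_def by (intro arg_cong[where f="\<lambda>x. 2 * x"] sum.cong refl arg_cong[where f="\<lambda>x. _ * x"]) auto

locale lsys = prob_space M for M :: "'a measure" +
  fixes w :: "nat \<Rightarrow> 'a \<Rightarrow> real" and a wbar s2 :: real and T :: nat
  assumes meas[measurable]: "\<And>t. w t \<in> borel_measurable M"
  and ind: "indep_vars (\<lambda>_. borel) w UNIV"
  and bnd: "\<And>t \<omega>. \<omega> \<in> space M \<Longrightarrow> \<bar>w t \<omega>\<bar> \<le> wbar"
  and mean: "\<And>t. expectation (w t) = 0"
  and var: "\<And>t. variance (w t) = s2"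
  and aa: "\<bar>a\<bar> < 1"
begin

lemma intg: "f \<in> borel_measurable M \<Longrightarrow> (\<And>\<omega>. \<omega> \<in> space M \<Longrightarrow> \<bar>f \<omega>\<bar> \<le> B) \<Longrightarrow> integrable M f"
  for f :: "'a \<Rightarrow> real"
  by (rule integrable_const_bound[where B=B]) auto

lemma wbar0: "0 \<le> wbar"
proof -
  obtain \<omega> where "\<omega> \<in> space M" using not_empty by blast
  from bnd[OF this, of 0] show ?thesis by linarith
qed

lemma w_int: "integrable M (w t)"
  by (rule intg[where B=wbar]) (auto intro: bnd)

lemma w2_int: "integrable M (\<lambda>\<omega>. (w t \<omega>)^2)"
proof (rule intg[where B="wbar^2"])
  fix \<omega> assume "\<omega> \<in> space M"
  from bnd[OF this, of t] show "\<bar>(w t \<omega>)^2\<bar> \<le> wbar^2"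
    by (metis abs_ge_zero abs_power2 power2_abs power_mono)
qed simp

lemma Ew2: "expectation (\<lambda>\<omega>. (w t \<omega>)^2) = s2"
  using var[of t] by (simp add: mean)

lemma s2_nonneg: "0 \<le> s2"
  unfolding Ew2[symmetric, of 0] by (rule integral_nonneg_AE) auto

lemma s2_le: "s2 \<le> wbar^2"
  unfolding Ew2[symmetric, of 0]
proof (rule integral_le_const[OF w2_int], rule AE_I2)
  fix \<omega> assume "\<omega> \<in> space M"
  from bnd[OF this, of 0] show "(w 0 \<omega>)^2 \<le> wbar^2"
    by (metis abs_ge_zero power2_abs power_mono)
qed

lemma indep_zero:
  fixes \<psi> :: "real \<Rightarrow> real" and \<Phi> :: "(nat \<Rightarrow> real) \<Rightarrow> real"
  assumes psi[measurable]: "\<psi> \<in> borel_measurable borel"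
    and phi[measurable]: "\<Phi> \<in> borel_measurable (PiM {..<r} (\<lambda>_. borel))"
    and i1: "integrable M (\<lambda>\<omega>. \<psi> (w r \<omega>))"
    and i2: "integrable M (\<lambda>\<omega>. \<Phi> (restrict (\<lambda>i. w i \<omega>) {..<r}))"
    and e0: "expectation (\<lambda>\<omega>. \<psi> (w r \<omega>)) = 0"
  shows "expectation (\<lambda>\<omega>. \<psi> (w r \<omega>) * \<Phi> (restrict (\<lambda>i. w i \<omega>) {..<r})) = 0"
proof -
  have iv: "indep_var (PiM {r} (\<lambda>_. borel)) (\<lambda>\<omega>. restrict (\<lambda>i. w i \<omega>) {r})
                      (PiM {..<r} (\<lambda>_. borel)) (\<lambda>\<omega>. restrict (\<lambda>i. w i \<omega>) {..<r})"
    by (rule indep_var_restrict[OF ind]) auto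
  have m1: "(\<lambda>g. \<psi> (g r)) \<in> borel_measurable (PiM {r} (\<lambda>_. borel))" by measurable
  have iv2: "indep_var borel ((\<lambda>g. \<psi> (g r)) \<circ> (\<lambda>\<omega>. restrict (\<lambda>i. w i \<omega>) {r}))
                      borel (\<Phi> \<circ> (\<lambda>\<omega>. restrict (\<lambda>i. w i \<omega>) {..<r}))"
    by (rule indep_var_compose[OF iv m1 phi])
  have iv3: "indep_var borel (\<lambda>\<omega>. \<psi> (w r \<omega>)) borel (\<lambda>\<omega>. \<Phi> (restrict (\<lambda>i. w i \<omega>) {..<r}))"
    using iv2 by (simp add: comp_def)
  show ?thesis
    using indep_var_lebesgue_integral[OF iv3 i1 i2] e0 by simp
qed

definition Yp :: "nat \<Rightarrow> (nat \<Rightarrow> real) \<Rightarrow> real" where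
  "Yp r f = f r * Gf a T r f + ((f r)^2 - s2) * hf a T r"

definition K :: real where "K = wbar^2 / (1 - \<bar>a\<bar>)^2"
definition Gb :: real where "Gb = 2 * wbar * \<bar>a\<bar> / ((1 - \<bar>a\<bar>) * (1 - a^2))"

lemma Yp_restrict: "q < r \<Longrightarrow> Yp q (restrict f {..<r}) = Yp q f"
  unfolding Yp_def by (simp add: Gf_restrict)

lemma G_meas[measurable]: "(\<lambda>\<omega>. Gf a T r (\<lambda>i. w i \<omega>)) \<in> borel_measurable M"
  unfolding Gf_def by measurable

lemma Y_meas[measurable]: "(\<lambda>\<omega>. Yp r (\<lambda>i. w i \<omega>)) \<in> borel_measurable M"
  unfolding Yp_def by measurable

lemma Gpi_meas[measurable]: "(\<lambda>g. Gf a T q g) \<in> borel_measurable (PiM {..<r} (\<lambda>_. borel))" if "q \<le> r"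
  unfolding Gf_def apply measurable using that by auto

lemma Ypi_meas[measurable]: "(\<lambda>g. Yp q g) \<in> borel_measurable (PiM {..<r} (\<lambda>_. borel))" if "q < r"
proof -
  have [measurable]: "Gf a T q \<in> borel_measurable (PiM {..<r} (\<lambda>_. borel))"
    using Gpi_meas[of q r] that by simp
  show ?thesis unfolding Yp_def apply measurable using that by auto
qed

lemma G_bnd: "\<omega> \<in> space M \<Longrightarrow> \<bar>Gf a T r (\<lambda>i. w i \<omega>)\<bar> \<le> Gb"
  unfolding Gb_def by (rule Gf_bound[OF aa]) (rule bnd)

lemma Y_bnd: "\<omega> \<in> space M \<Longrightarrow> \<bar>Yp r (\<lambda>i. w i \<omega>)\<bar> \<le> K"
  unfolding K_def Yp_def by (rule Yf_bound[OF aa _ s2_nonneg s2_le]) (rule bnd)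

lemma Y_int: "integrable M (\<lambda>\<omega>. Yp r (\<lambda>i. w i \<omega>))"
  by (rule intg[OF Y_meas Y_bnd])

lemma EY0: "expectation (\<lambda>\<omega>. Yp r (\<lambda>i. w i \<omega>)) = 0"
proof -
  have i1: "integrable M (\<lambda>\<omega>. w r \<omega> * Gf a T r (\<lambda>i. w i \<omega>))"
  proof (rule intg[where B="wbar * Gb"])
    fix \<omega> assume o: "\<omega> \<in> space M"
    show "\<bar>w r \<omega> * Gf a T r (\<lambda>i. w i \<omega>)\<bar> \<le> wbar * Gb"
      unfolding abs_mult by (rule mult_mono[OF bnd[OF o] G_bnd[OF o]]) (auto simp: wbar0)
  qed measurable
  have i2: "integrable M (\<lambda>\<omega>. ((w r \<omega>)^2 - s2) * hf a T r)"
    using w2_int by auto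
  have e1: "expectation (\<lambda>\<omega>. w r \<omega> * Gf a T r (\<lambda>i. w i \<omega>)) = 0"
  proof -
    have "expectation (\<lambda>\<omega>. id (w r \<omega>) * Gf a T r (restrict (\<lambda>i. w i \<omega>) {..<r})) = 0"
    proof (rule indep_zero)
      show "integrable M (\<lambda>\<omega>. id (w r \<omega>))" using w_int by simp
      show "integrable M (\<lambda>\<omega>. Gf a T r (restrict (\<lambda>i. w i \<omega>) {..<r}))"
        unfolding Gf_restrict[OF order_refl] by (rule intg[OF G_meas G_bnd])
      show "expectation (\<lambda>\<omega>. id (w r \<omega>)) = 0" using mean by simp
    qed (auto intro: Gpi_meas)
    then show ?thesis unfolding Gf_restrict[OF order_refl] by simp
  qed
  have e2: "expectation (\<lambda>\<omega>. ((w r \<omega>)^2 - s2) * hf a T r) = 0"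
    using w2_int Ew2[of r] by (simp add: prob_space)
  show ?thesis unfolding Yp_def
    using Bochner_Integration.integral_add[OF i1 i2] e1 e2 by simp
qed

lemma K0: "0 \<le> K" unfolding K_def by simp

lemma YY_int: "integrable M (\<lambda>\<omega>. Yp r (\<lambda>i. w i \<omega>) * Yp q (\<lambda>i. w i \<omega>))"
proof (rule intg[where B="K*K"])
  fix \<omega> assume o: "\<omega> \<in> space M"
  show "\<bar>Yp r (\<lambda>i. w i \<omega>) * Yp q (\<lambda>i. w i \<omega>)\<bar> \<le> K * K"
    unfolding abs_mult by (rule mult_mono[OF Y_bnd[OF o] Y_bnd[OF o]]) (auto simp: K0)
qed measurable

lemma EYY: assumes qr: "q < r"
  shows "expectation (\<lambda>\<omega>. Yp r (\<lambda>i. w i \<omega>) * Yp q (\<lambda>i. w i \<omega>)) = 0"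
proof -
  define t1 where "t1 = (\<lambda>\<omega>. w r \<omega> * (Gf a T r (\<lambda>i. w i \<omega>) * Yp q (\<lambda>i. w i \<omega>)))"
  define t2 where "t2 = (\<lambda>\<omega>. ((w r \<omega>)^2 - s2) * (hf a T r * Yp q (\<lambda>i. w i \<omega>)))"
  have split: "\<And>\<omega>. Yp r (\<lambda>i. w i \<omega>) * Yp q (\<lambda>i. w i \<omega>) = t1 \<omega> + t2 \<omega>"
    unfolding t1_def t2_def Yp_def[of r] by (simp add: algebra_simps)
  have GY_int: "integrable M (\<lambda>\<omega>. Gf a T r (\<lambda>i. w i \<omega>) * Yp q (\<lambda>i. w i \<omega>))"
  proof (rule intg[where B="Gb*K"])
    fix \<omega> assume o: "\<omega> \<in> space M"
    show "\<bar>Gf a T r (\<lambda>i. w i \<omega>) * Yp q (\<lambda>i. w i \<omega>)\<bar> \<le> Gb * K"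
      unfolding abs_mult by (rule mult_mono[OF G_bnd[OF o] Y_bnd[OF o]]) (auto simp: K0 intro: order_trans[OF abs_ge_zero G_bnd[OF o]])
  qed measurable
  have i1: "integrable M t1"
  proof (unfold t1_def, rule intg[where B="wbar*(Gb*K)"])
    fix \<omega> assume o: "\<omega> \<in> space M"
    have "\<bar>Gf a T r (\<lambda>i. w i \<omega>) * Yp q (\<lambda>i. w i \<omega>)\<bar> \<le> Gb * K"
      unfolding abs_mult by (rule mult_mono[OF G_bnd[OF o] Y_bnd[OF o]]) (auto simp: K0 intro: order_trans[OF abs_ge_zero G_bnd[OF o]])
    then show "\<bar>w r \<omega> * (Gf a T r (\<lambda>i. w i \<omega>) * Yp q (\<lambda>i. w i \<omega>))\<bar> \<le> wbar * (Gb * K)"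
      unfolding abs_mult[of "w r \<omega>"] by (rule mult_mono[OF bnd[OF o]]) (auto simp: wbar0)
  qed measurable
  have i2: "integrable M t2"
  proof -
    have "integrable M (\<lambda>\<omega>. Yp r (\<lambda>i. w i \<omega>) * Yp q (\<lambda>i. w i \<omega>) - t1 \<omega>)"
      using YY_int i1 by auto
    moreover have "(\<lambda>\<omega>. Yp r (\<lambda>i. w i \<omega>) * Yp q (\<lambda>i. w i \<omega>) - t1 \<omega>) = t2"
      using split by (auto simp: fun_eq_iff)
    ultimately show ?thesis by simp
  qed
  have e1: "expectation t1 = 0"
  proof -
    have "expectation (\<lambda>\<omega>. id (w r \<omega>) * ((\<lambda>g. Gf a T r g * Yp q g) (restrict (\<lambda>i. w i \<omega>) {..<r}))) = 0"
    proof (rule indep_zero)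
      show "integrable M (\<lambda>\<omega>. id (w r \<omega>))" using w_int by simp
      show "integrable M (\<lambda>\<omega>. (\<lambda>g. Gf a T r g * Yp q g) (restrict (\<lambda>i. w i \<omega>) {..<r}))"
        unfolding Gf_restrict[OF order_refl] Yp_restrict[OF qr] by (rule GY_int)
      show "expectation (\<lambda>\<omega>. id (w r \<omega>)) = 0" using mean by simp
      show "(\<lambda>g. Gf a T r g * Yp q g) \<in> borel_measurable (PiM {..<r} (\<lambda>_. borel))"
        using Gpi_meas[of r r] Ypi_meas[OF qr] by measurable
    qed auto
    then show ?thesis unfolding Gf_restrict[OF order_refl] Yp_restrict[OF qr] t1_def by simp
  qed
  have e2: "expectation t2 = 0"
  proof -
    have "expectation (\<lambda>\<omega>. (\<lambda>x. x^2 - s2) (w r \<omega>) * ((\<lambda>g. hf a T r * Yp q g) (restrict (\<lambda>i. w i \<omega>) {..<r}))) = 0"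
    proof (rule indep_zero)
      show "integrable M (\<lambda>\<omega>. (\<lambda>x. x^2 - s2) (w r \<omega>))" using w2_int by auto
      show "integrable M (\<lambda>\<omega>. (\<lambda>g. hf a T r * Yp q g) (restrict (\<lambda>i. w i \<omega>) {..<r}))"
        unfolding Yp_restrict[OF qr] using Y_int by auto
      show "expectation (\<lambda>\<omega>. (\<lambda>x. x^2 - s2) (w r \<omega>)) = 0" using w2_int Ew2[of r] by (simp add: prob_space)
      show "(\<lambda>g. hf a T r * Yp q g) \<in> borel_measurable (PiM {..<r} (\<lambda>_. borel))"
        using Ypi_meas[OF qr] by measurable
    qed auto
    then show ?thesis unfolding Yp_restrict[OF qr] t2_def by simp
  qed
  show ?thesis unfolding split using Bochner_Integration.integral_add[OF i1 i2] e1 e2 by simp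
qed

lemma EY2: "expectation (\<lambda>\<omega>. Yp r (\<lambda>i. w i \<omega>) * Yp r (\<lambda>i. w i \<omega>)) \<le> K * K"
proof (rule integral_le_const[OF YY_int], rule AE_I2)
  fix \<omega> assume o: "\<omega> \<in> space M"
  have "\<bar>Yp r (\<lambda>i. w i \<omega>)\<bar> * \<bar>Yp r (\<lambda>i. w i \<omega>)\<bar> \<le> K * K"
    by (rule mult_mono[OF Y_bnd[OF o] Y_bnd[OF o]]) (auto simp: K0)
  then show "Yp r (\<lambda>i. w i \<omega>) * Yp r (\<lambda>i. w i \<omega>) \<le> K * K" by (simp add: abs_mult[symmetric])
qed

lemma main_sum: "expectation (\<lambda>\<omega>. (\<Sum>r<T. Yp r (\<lambda>i. w i \<omega>))^2) \<le> real T * (K * K)"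
proof -
  have "expectation (\<lambda>\<omega>. (\<Sum>r<T. Yp r (\<lambda>i. w i \<omega>))^2)
      = expectation (\<lambda>\<omega>. \<Sum>r<T. \<Sum>q<T. Yp r (\<lambda>i. w i \<omega>) * Yp q (\<lambda>i. w i \<omega>))"
    by (simp add: power2_eq_square sum_product)
  also have "\<dots> = (\<Sum>r<T. \<Sum>q<T. expectation (\<lambda>\<omega>. Yp r (\<lambda>i. w i \<omega>) * Yp q (\<lambda>i. w i \<omega>)))"
    by (simp add: Bochner_Integration.integral_sum YY_int)
  also have "\<dots> = (\<Sum>r<T. expectation (\<lambda>\<omega>. Yp r (\<lambda>i. w i \<omega>) * Yp r (\<lambda>i. w i \<omega>)))"
  proof (rule sum.cong[OF refl])
    fix r assume r: "r \<in> {..<T}"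
    have "(\<Sum>q<T. expectation (\<lambda>\<omega>. Yp r (\<lambda>i. w i \<omega>) * Yp q (\<lambda>i. w i \<omega>)))
        = (\<Sum>q<T. if q = r then expectation (\<lambda>\<omega>. Yp r (\<lambda>i. w i \<omega>) * Yp r (\<lambda>i. w i \<omega>)) else 0)"
    proof (rule sum.cong[OF refl])
      fix q assume "q \<in> {..<T}"
      show "expectation (\<lambda>\<omega>. Yp r (\<lambda>i. w i \<omega>) * Yp q (\<lambda>i. w i \<omega>))
        = (if q = r then expectation (\<lambda>\<omega>. Yp r (\<lambda>i. w i \<omega>) * Yp r (\<lambda>i. w i \<omega>)) else 0)"
      proof (cases q r rule: linorder_cases)
        case less then show ?thesis using EYY[OF less] by simp
      next
        case greater then show ?thesis using EYY[OF greater] by (simp add: mult.commute)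
      qed simp
    qed
    also have "\<dots> = expectation (\<lambda>\<omega>. Yp r (\<lambda>i. w i \<omega>) * Yp r (\<lambda>i. w i \<omega>))"
      using r by (simp add: sum.delta)
    finally show "(\<Sum>q<T. expectation (\<lambda>\<omega>. Yp r (\<lambda>i. w i \<omega>) * Yp q (\<lambda>i. w i \<omega>)))
       = expectation (\<lambda>\<omega>. Yp r (\<lambda>i. w i \<omega>) * Yp r (\<lambda>i. w i \<omega>))" .
  qed
  also have "\<dots> \<le> (\<Sum>r<T. K * K)" by (rule sum_mono) (rule EY2)
  also have "\<dots> = real T * (K * K)" by simp
  finally show ?thesis .
qed

lemma traj_closed: "traj a w (Suc t) \<omega> = (\<Sum>s<Suc t. a^(t-s) * w s \<omega>)"
proof (induction t)
  case 0 then show ?case by simp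
next
  case (Suc t)
  have "traj a w (Suc (Suc t)) \<omega> = a * (\<Sum>s<Suc t. a^(t-s) * w s \<omega>) + w (Suc t) \<omega>"
    using Suc by simp
  also have "a * (\<Sum>s<Suc t. a^(t-s) * w s \<omega>) = (\<Sum>s<Suc t. a^(Suc t-s) * w s \<omega>)"
    unfolding sum_distrib_left by (rule sum.cong) (auto simp: Suc_diff_le)
  finally show ?case by simp
qed

lemma X_int: "integrable M (\<lambda>\<omega>. (traj a w (Suc t) \<omega>)^2)"
proof (unfold traj_closed, rule intg[where B="(real (Suc t) * wbar)^2"])
  fix \<omega> assume o: "\<omega> \<in> space M"
  have "\<bar>\<Sum>s<Suc t. a^(t-s) * w s \<omega>\<bar> \<le> (\<Sum>s<Suc t. \<bar>a^(t-s) * w s \<omega>\<bar>)" by (rule sum_abs)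
  also have "\<dots> \<le> (\<Sum>s<Suc t. wbar)"
  proof (rule sum_mono)
    fix s
    have "\<bar>a^(t-s)\<bar> \<le> 1" using aa by (simp add: power_abs power_le_one)
    then have "\<bar>a^(t-s)\<bar> * \<bar>w s \<omega>\<bar> \<le> 1 * wbar"
      by (intro mult_mono bnd[OF o]) auto
    then show "\<bar>a^(t-s) * w s \<omega>\<bar> \<le> wbar" by (simp add: abs_mult)
  qed
  finally have "\<bar>\<Sum>s<Suc t. a^(t-s) * w s \<omega>\<bar> \<le> real (Suc t) * wbar" by simp
  then show "\<bar>(\<Sum>s<Suc t. a^(t-s) * w s \<omega>)^2\<bar> \<le> (real (Suc t) * wbar)^2"
    by (metis abs_ge_zero abs_power2 power2_abs power_mono)
qed measurable

lemma Z_eq: "(\<Sum>t<T. (traj a w (Suc t) \<omega>)^2) = (\<Sum>r<T. Yp r (\<lambda>i. w i \<omega>) + s2 * hf a T r)"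
  unfolding traj_closed alg Yp_def by (rule sum.cong) (auto simp: algebra_simps)

lemma final:
  "expectation (\<lambda>\<omega>. (\<Sum>t=1..T. (traj a w t \<omega>)^2 - expectation (\<lambda>\<eta>. (traj a w t \<eta>)^2))^2)
    \<le> wbar ^ 4 * (1 + a^2) / ((1 - \<bar>a\<bar>) ^ 4 * (1 - a^2)) * real T"
proof -
  have EZ: "(\<Sum>t<T. expectation (\<lambda>\<eta>. (traj a w (Suc t) \<eta>)^2)) = (\<Sum>r<T. s2 * hf a T r)"
  proof -
    have "(\<Sum>t<T. expectation (\<lambda>\<eta>. (traj a w (Suc t) \<eta>)^2))
        = expectation (\<lambda>\<eta>. \<Sum>t<T. (traj a w (Suc t) \<eta>)^2)"
      by (rule Bochner_Integration.integral_sum[symmetric]) (rule X_int)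
    also have "\<dots> = expectation (\<lambda>\<eta>. \<Sum>r<T. Yp r (\<lambda>i. w i \<eta>) + s2 * hf a T r)"
      unfolding Z_eq ..
    also have "\<dots> = (\<Sum>r<T. expectation (\<lambda>\<eta>. Yp r (\<lambda>i. w i \<eta>) + s2 * hf a T r))"
      by (rule Bochner_Integration.integral_sum) (auto intro: Y_int)
    also have "\<dots> = (\<Sum>r<T. s2 * hf a T r)"
      by (rule sum.cong[OF refl]) (simp add: Bochner_Integration.integral_add Y_int EY0 prob_space)
    finally show ?thesis .
  qed
  have S_eq: "\<And>\<omega>. (\<Sum>t=1..T. (traj a w t \<omega>)^2 - expectation (\<lambda>\<eta>. (traj a w t \<eta>)^2))
      = (\<Sum>r<T. Yp r (\<lambda>i. w i \<omega>))"
  proof -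
    fix \<omega>
    have "(\<Sum>t=1..T. (traj a w t \<omega>)^2 - expectation (\<lambda>\<eta>. (traj a w t \<eta>)^2))
       = (\<Sum>t<T. (traj a w (Suc t) \<omega>)^2 - expectation (\<lambda>\<eta>. (traj a w (Suc t) \<eta>)^2))"
      unfolding One_nat_def by (rule sum.atLeast1_atMost_eq)
    also have "\<dots> = (\<Sum>t<T. (traj a w (Suc t) \<omega>)^2) - (\<Sum>t<T. expectation (\<lambda>\<eta>. (traj a w (Suc t) \<eta>)^2))"
      by (simp add: sum_subtractf)
    also have "\<dots> = (\<Sum>r<T. Yp r (\<lambda>i. w i \<omega>))"
      unfolding Z_eq EZ by (simp add: sum.distrib)
    finally show "?thesis \<omega>" .
  qed
  have "expectation (\<lambda>\<omega>. (\<Sum>t=1..T. (traj a w t \<omega>)^2 - expectation (\<lambda>\<eta>. (traj a w t \<eta>)^2))^2)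
      \<le> real T * (K * K)" unfolding S_eq by (rule main_sum)
  also have "\<dots> \<le> wbar ^ 4 * (1 + a^2) / ((1 - \<bar>a\<bar>) ^ 4 * (1 - a^2)) * real T"
  proof -
    have a2: "0 < 1 - a^2" "a^2 < 1" using aa by (auto simp: abs_square_less_1)
    have q: "1 \<le> (1 + a^2) / (1 - a^2)" using a2 by (simp add: field_simps)
    have KK: "K * K = wbar ^ 4 / (1 - \<bar>a\<bar>) ^ 4" unfolding K_def by (simp add: power2_eq_square power4_eq_xxxx mult.assoc)
    have "K * K * 1 \<le> K * K * ((1 + a^2) / (1 - a^2))" by (rule mult_left_mono[OF q]) simp
    then have "K * K \<le> wbar ^ 4 * (1 + a^2) / ((1 - \<bar>a\<bar>) ^ 4 * (1 - a^2))"
      unfolding KK by simp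
    then have "real T * (K * K) \<le> real T * (wbar ^ 4 * (1 + a^2) / ((1 - \<bar>a\<bar>) ^ 4 * (1 - a^2)))"
      by (rule mult_left_mono) simp
    then show ?thesis by (simp only: mult.commute)
  qed
  finally show ?thesis .
qed

end

theorem lemma3:
  fixes M :: "'a measure" and w :: "nat \<Rightarrow> 'a \<Rightarrow> real"
    and a wbar sigma :: real and T :: nat
  assumes "prob_space M"
    and "\<And>t. w t \<in> borel_measurable M"
    and "prob_space.indep_vars M (\<lambda>_. borel) w UNIV"
    and "\<And>t. distr M borel (w t) = distr M borel (w 0)"
    and "\<And>t \<omega>. \<omega> \<in> space M \<Longrightarrow> \<bar>w t \<omega>\<bar> \<le> wbar"
    and "\<And>t. prob_space.expectation M (w t) = 0"
    and "\<And>t. prob_space.variance M (w t) = sigma\<^sup>2"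
    and "\<bar>a\<bar> < 1"
  shows "prob_space.expectation M
           (\<lambda>\<omega>. (\<Sum>t=1..T. (traj a w t \<omega>)\<^sup>2
                     - prob_space.expectation M (\<lambda>\<eta>. (traj a w t \<eta>)\<^sup>2))\<^sup>2)
         \<le> wbar ^ 4 * (1 + a\<^sup>2) / ((1 - \<bar>a\<bar>) ^ 4 * (1 - a\<^sup>2)) * real T"
proof -
  interpret lsys M w a wbar "sigma^2" T
    using assms(1,2,3,5,6,7,8) by (simp add: lsys_def lsys_axioms_def)
  show ?thesis by (rule final)
qed

end
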